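(* Consider a prototypical cluster-randomized SMART with common cluster size $m$ and no covariates, analyzed with the cell-mean model, known weights and an exchangeable working covariance, as in the context. Fix an embedded DTR $(a_1,a_2)$. Assume: (a) consistency of potential outcomes; (b) $E_{a_1,a_2}\big[(\mathbf Y_i-\beta_{(a_1,a_2)}1_m)(\mathbf Y_i-\beta_{(a_1,a_2)}1_m)^T\mid R_i=0\big]\preceq \mathrm{Cov}_{a_1,a_2}(\mathbf Y_i)$ in the Loewner order; (c) $\mathrm{Cov}_{a_1,a_2}(\mathbf Y_i)=\sigma^2_{a_1,a_2}\,\mathrm{Exch}_m(\rho_{a_1,a_2})$. Then the asymptotic variance $\tau^2(a_1,a_2)$ of $\sqrt N\,\hat\beta_{(a_1,a_2)}$ satisfies $$\tau^2(a_1,a_2)\le \frac{2(2-p_{a_1})\,\sigma^2_{a_1,a_2}\,[1+(m-1)\rho_{a_1,a_2}]}{m}.$$ Consequently, fix $b_2,c_2\in\{1,-1\}$ and suppose the two DTRs $(1,b_2)$ and $(-1,c_2)$ share a common variance $\sigma^2$ and common ICC $\rho$. Then for any $\delta>0$ and $\alpha,\beta\in(0,1)$, $$\frac{(z_\beta+z_{\alpha/2})^2\,\big(\tau^2(1,b_2)+\tau^2(-1,c_2)\big)}{\delta^2\sigma^2}\;\le\;\frac{4(z_\beta+z_{\alpha/2})^2}{m\delta^2}\,\big(1+(m-1)\rho\big)\Big(1+\frac{(1-p_1)+(1-p_{-1})}{2}\Big).$$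
   Context: Prototypical cluster-randomized SMART. There are $N$ i.i.d. clusters, each with $m$ individuals and outcome vector $\mathbf Y_i\in\mathbb R^m$. - Stage 1: $A_{1i}\in\{1,-1\}$ is assigned with probability $1/2$ each. - A response indicator $R_i\in\{0,1\}$ is then observed, with $p_{a_1}=\Pr(R_i=1\mid A_{1i}=a_1)$. - Stage 2: non-responders ($R_i=0$) are re-randomized to $A_{2i}\in\{1,-1\}$ with probability $1/2$ each; responders are not re-randomized. There are four embedded DTRs $(a_1,a_2)\in\{1,-1\}^2$. A cluster is consistent with $(a_1,a_2)$ ($I_i(a_1,a_2)=1$) if $A_{1i}=a_1$ and either $R_i=1$, or $R_i=0$ and $A_{2i}=a_2$. The known weights are $W_i=2$ if $R_i=1$ and $W_i=4$ if $R_i=0$. $E_{a_1,a_2}$, $\mathrm{Cov}_{a_1,a_2}$ and $\Pr_{a_1,a_2}$ refer to the potential-outcome distribution had all clusters followed DTR $(a_1,a_2)$. For the non-responder conditioning in (b), $\Pr_{a_1,a_2}(R_i=1)=p_{a_1}$. The mean model is the cell-mean parameterization $E_{a_1,a_2}(Y_{ij})=\beta_{(a_1,a_2)}$, one parameter per DTR. It is estimated by solving $$\sum_i\sum_{(a_1,a_2)} I_i(a_1,a_2)\,W_i\,D_{(a_1,a_2)}^T V^{-1}\big(\mathbf Y_i-\beta_{(a_1,a_2)}1_m\big)=0,$$ where $D_{(a_1,a_2)}=1_m e_{(a_1,a_2)}^T$, with $e_{(a_1,a_2)}$ the unit vector picking out the DTR's parameter. The working covariance is $V=s^2\,\mathrm{Exch}_m(r)$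 (positive definite). Here $\mathrm{Exch}_m(r)$ denotes the $m\times m$ matrix with ones on the diagonal and $r$ off the diagonal, and $1_m$ is the all-ones vector. $\tau^2(a_1,a_2)$ is the $(a_1,a_2)$ diagonal entry of the sandwich matrix $J^{-1}AJ^{-1}$, where $J=E\sum I_i W_i D^TV^{-1}D$ and $A=E[U_iU_i^T]$, with $U_i$ the summand of the estimating equation evaluated at the true parameters. $z_\kappa$ denotes the upper $\kappa$ quantile of the standard normal distribution. *)

theory Defs
  imports "HOL-Probability.Probability"
begin

definition zq :: "real \<Rightarrow> real" where
  "zq \<kappa> = (THE x. (LBINT t:{x<..}. std_normal_density t) = \<kappa>)"

text \<open>Coding of treatment options: True ~ 1, False ~ -1.  DTRs are indexed by bool x bool.\<close>
definition enc :: "bool \<Rightarrow> int" where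
  "enc b = (if b then 1 else -1)"

definition dtr_of :: "int \<Rightarrow> int \<Rightarrow> bool \<times> bool" where
  "dtr_of a1 a2 = (a1 = 1, a2 = 1)"

definition exch :: "real \<Rightarrow> real^'m^'m" where
  "exch r = (\<chi> j k. if j = k then 1 else r)"

definition onesv :: "real^'m" where
  "onesv = (\<chi> j. 1)"

definition loewner_le :: "real^'m^'m \<Rightarrow> real^'m^'m \<Rightarrow> bool" where
  "loewner_le A B \<longleftrightarrow> (\<forall>v. v \<bullet> (A *v v) \<le> v \<bullet> (B *v v))"

definition pos_def :: "real^'m^'m \<Rightarrow> bool" where
  "pos_def V \<longleftrightarrow> (\<forall>v. v \<noteq> 0 \<longrightarrow> 0 < v \<bullet> (V *v v))"

definition Ind :: "('w \<Rightarrow> int) \<Rightarrow> ('w \<Rightarrow> int) \<Rightarrow> ('w \<Rightarrow> bool) \<Rightarrow> bool \<times> bool \<Rightarrow> 'w \<Rightarrow> real" where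
  "Ind A1 A2 R e \<omega> =
     (if A1 \<omega> = enc (fst e) \<and> (R \<omega> \<or> (\<not> R \<omega> \<and> A2 \<omega> = enc (snd e))) then 1 else 0)"

definition Wt :: "('w \<Rightarrow> bool) \<Rightarrow> 'w \<Rightarrow> real" where
  "Wt R \<omega> = (if R \<omega> then 2 else 4)"

definition Dmat :: "bool \<times> bool \<Rightarrow> real^(bool \<times> bool)^'m" where
  "Dmat e = (\<chi> j d. if d = e then 1 else 0)"

definition Ufun :: "('w \<Rightarrow> int) \<Rightarrow> ('w \<Rightarrow> int) \<Rightarrow> ('w \<Rightarrow> bool) \<Rightarrow> ('w \<Rightarrow> real^'m)
     \<Rightarrow> real^'m^'m \<Rightarrow> (bool \<times> bool \<Rightarrow> real) \<Rightarrow> 'w \<Rightarrow> real^(bool \<times> bool)" where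
  "Ufun A1 A2 R Y V \<beta> \<omega> =
     (\<Sum>e\<in>UNIV. (Ind A1 A2 R e \<omega> * Wt R \<omega>) *\<^sub>R
        (transpose (Dmat e) *v (matrix_inv V *v (Y \<omega> - \<beta> e *\<^sub>R onesv))))"

definition Jmat :: "'w measure \<Rightarrow> ('w \<Rightarrow> int) \<Rightarrow> ('w \<Rightarrow> int) \<Rightarrow> ('w \<Rightarrow> bool)
     \<Rightarrow> real^'m^'m \<Rightarrow> real^(bool \<times> bool)^(bool \<times> bool)" where
  "Jmat M A1 A2 R V = (\<chi> d d'. integral\<^sup>L M (\<lambda>\<omega>.
      \<Sum>e\<in>UNIV. Ind A1 A2 R e \<omega> * Wt R \<omega> *
        ((transpose (Dmat e :: real^(bool \<times> bool)^'m) ** matrix_inv V ** Dmat e) $ d $ d')))"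

definition Amat :: "'w measure \<Rightarrow> ('w \<Rightarrow> int) \<Rightarrow> ('w \<Rightarrow> int) \<Rightarrow> ('w \<Rightarrow> bool) \<Rightarrow> ('w \<Rightarrow> real^'m)
     \<Rightarrow> real^'m^'m \<Rightarrow> (bool \<times> bool \<Rightarrow> real) \<Rightarrow> real^(bool \<times> bool)^(bool \<times> bool)" where
  "Amat M A1 A2 R Y V \<beta> = (\<chi> d d'. integral\<^sup>L M (\<lambda>\<omega>.
      Ufun A1 A2 R Y V \<beta> \<omega> $ d * Ufun A1 A2 R Y V \<beta> \<omega> $ d'))"

definition tau2 :: "'w measure \<Rightarrow> ('w \<Rightarrow> int) \<Rightarrow> ('w \<Rightarrow> int) \<Rightarrow> ('w \<Rightarrow> bool) \<Rightarrow> ('w \<Rightarrow> real^'m)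
     \<Rightarrow> real^'m^'m \<Rightarrow> (int \<times> int \<Rightarrow> real) \<Rightarrow> int \<Rightarrow> int \<Rightarrow> real" where
  "tau2 M A1 A2 R Y V \<beta> a1 a2 =
     (let J = Jmat M A1 A2 R V;
          A = Amat M A1 A2 R Y V (\<lambda>e. \<beta> (enc (fst e), enc (snd e)))
      in (matrix_inv J ** A ** matrix_inv J) $ dtr_of a1 a2 $ dtr_of a1 a2)"

definition covmat :: "'w measure \<Rightarrow> ('w \<Rightarrow> real^'m) \<Rightarrow> real^'m^'m" where
  "covmat M X = (\<chi> j k. integral\<^sup>L M (\<lambda>\<omega>.
      (X \<omega> $ j - integral\<^sup>L M (\<lambda>\<eta>. X \<eta> $ j)) * (X \<omega> $ k - integral\<^sup>L M (\<lambda>\<eta>. X \<eta> $ k))))"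

definition cond_moment :: "'w measure \<Rightarrow> ('w \<Rightarrow> real^'m) \<Rightarrow> real \<Rightarrow> 'w set \<Rightarrow> real^'m^'m" where
  "cond_moment M X b E = (\<chi> j k.
      integral\<^sup>L M (\<lambda>\<omega>. indicator E \<omega> * ((X \<omega> $ j - b) * (X \<omega> $ k - b))) / measure M E)"

end

theory Submission
  imports Defs
begin

lemma sum_if_eq: "(\<Sum>k\<in>(UNIV::'m::finite set). if j = k then (1::real) else r) = 1 + (real CARD('m) - 1) * r"
proof -
  have "(\<Sum>k\<in>(UNIV::'m set). if j = k then (1::real) else r) = (\<Sum>k\<in>UNIV. r + (if j = k then 1 - r else 0))"
    by (rule sum.cong) auto
  also have "\<dots> = real CARD('m) * r + (1 - r)" by (simp add: sum.distrib)
  finally show ?thesis by (simp add: algebra_simps)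
qed

lemma exch_ones: "(c *\<^sub>R exch r :: real^'m^'m) *v onesv = (c * (1 + (real CARD('m) - 1) * r)) *\<^sub>R onesv"
  by (simp add: vec_eq_iff matrix_vector_mult_def exch_def onesv_def sum_distrib_left[symmetric] sum_if_eq)

lemma transpose_exch: "transpose (c *\<^sub>R exch r :: real^'m^'m) = c *\<^sub>R exch r"
  by (simp add: vec_eq_iff transpose_def exch_def)

lemma ones_inner: "onesv \<bullet> (x::real^'m) = (\<Sum>j\<in>UNIV. x $ j)"
  by (simp add: inner_vec_def onesv_def)

lemma onesv_nz: "(onesv :: real^'m) \<noteq> 0"
  by (simp add: onesv_def vec_eq_iff)

lemma inv_props:
  fixes V :: "real^'m^'m"
  assumes "pos_def V"
  shows "V ** matrix_inv V = mat 1"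
proof -
  have "inj ((*v) V)"
  proof (rule injI)
    fix x y assume "V *v x = V *v y"
    hence "V *v (x - y) = 0" by (simp add: matrix_vector_mult_diff_distrib)
    hence "(x - y) \<bullet> (V *v (x - y)) = 0" by simp
    thus "x = y" using assms unfolding pos_def_def by (metis eq_iff_diff_eq_0 less_irrefl)
  qed
  then obtain B where "B ** V = mat 1" using matrix_left_invertible_injective by blast
  hence "V ** B = mat 1" "B ** V = mat 1" using matrix_left_right_inverse by blast+
  hence "\<exists>A'. V ** A' = mat 1 \<and> A' ** V = mat 1" by blast
  from someI_ex[OF this] show ?thesis unfolding matrix_inv_def by blast
qed

lemma Vinv_sum:
  fixes V :: "real^'m^'m"
  assumes V: "V = s\<^sup>2 *\<^sub>R exch r" and pd: "pos_def V"
  defines "c0 \<equiv> s\<^sup>2 * (1 + (real CARD('m) - 1) * r)"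
  shows "c0 > 0" "\<And>x. (\<Sum>j\<in>UNIV. (matrix_inv V *v x) $ j) = (1/c0) * (\<Sum>j\<in>UNIV. x $ j)"
proof -
  have V1: "V *v onesv = c0 *\<^sub>R onesv" unfolding V c0_def by (rule exch_ones)
  have "0 < onesv \<bullet> (V *v onesv)" using pd onesv_nz unfolding pos_def_def by blast
  also have "onesv \<bullet> (V *v onesv) = c0 * real CARD('m)" unfolding V1 by (simp add: inner_vec_def onesv_def)
  finally show c0: "c0 > 0" by (simp add: zero_less_mult_iff)
  fix x :: "real^'m"
  have VV: "V ** matrix_inv V = mat 1" by (rule inv_props[OF pd])
  have tV: "transpose V = V" unfolding V by (rule transpose_exch)
  have "(\<Sum>j\<in>UNIV. (matrix_inv V *v x) $ j) = onesv \<bullet> (matrix_inv V *v x)" by (simp add: ones_inner)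
  also have "\<dots> = (1/c0) * ((V *v onesv) \<bullet> (matrix_inv V *v x))" using c0 by (simp add: V1)
  also have "(V *v onesv) \<bullet> (matrix_inv V *v x) = onesv \<bullet> (V *v (matrix_inv V *v x))"
    by (metis dot_lmul_matrix tV transpose_matrix_vector inner_commute)
  also have "\<dots> = onesv \<bullet> x" by (simp add: matrix_vector_mul_assoc VV)
  finally show "(\<Sum>j\<in>UNIV. (matrix_inv V *v x) $ j) = (1/c0) * (\<Sum>j\<in>UNIV. x $ j)" by (simp add: ones_inner)
qed

lemma Ufun_coord:
  "Ufun A1 A2 R Y V \<beta> \<omega> $ d = Ind A1 A2 R d \<omega> * Wt R \<omega> * (\<Sum>j\<in>UNIV. (matrix_inv V *v (Y \<omega> - \<beta> d *\<^sub>R onesv)) $ j)"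
proof -
  have aux: "\<And>e v. (v v* (Dmat e :: real^(bool\<times>bool)^'m)) $ d = (if e = d then (\<Sum>j\<in>UNIV. v $ j) else 0)"
    by (auto simp add: vector_matrix_mult_def Dmat_def)
  show ?thesis unfolding Ufun_def sum_component
    by (simp add: aux if_distrib[of "\<lambda>x. _ * x"] cong: if_cong)
qed

lemma Dmat_prod:
  "(transpose (Dmat e :: real^(bool\<times>bool)^'m) ** W ** Dmat e) $ d $ d' = (if d = e \<and> d' = e then (\<Sum>j\<in>UNIV. \<Sum>k\<in>UNIV. W$j$k) else 0)"
  by (auto simp add: matrix_matrix_mult_def transpose_def Dmat_def sum_distrib_right[symmetric] intro: sum.swap)

lemma inv_scalar:
  fixes c :: real
  assumes "c \<noteq> 0"
  shows "matrix_inv (c *\<^sub>R mat 1 :: real^'n^'n) = (1/c) *\<^sub>R mat 1"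
proof -
  let ?J = "c *\<^sub>R mat 1 :: real^'n^'n"
  have w: "?J ** ((1/c) *\<^sub>R mat 1) = mat 1 \<and> ((1/c) *\<^sub>R mat 1) ** ?J = mat 1"
    using assms by (simp add: matrix_scalar_ac scalar_matrix_assoc[symmetric])
  have ex: "\<exists>A'. ?J ** A' = mat 1 \<and> A' ** ?J = mat 1" using w by blast
  have "?J ** matrix_inv ?J = mat 1" using someI_ex[OF ex] unfolding matrix_inv_def by blast
  hence "c *\<^sub>R matrix_inv ?J = mat 1" by (simp add: scalar_matrix_assoc[symmetric])
  hence "(1/c) *\<^sub>R (c *\<^sub>R matrix_inv ?J) = (1/c) *\<^sub>R mat 1" by simp
  thus ?thesis using assms by simp
qed

lemma sandwich_scalar:
  fixes A :: "real^'n^'n"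
  shows "(((k::real) *\<^sub>R mat 1) ** A ** (k *\<^sub>R mat 1)) $ e $ e = k^2 * A $ e $ e"
  by (simp add: matrix_scalar_ac scalar_matrix_assoc[symmetric] power2_eq_square)

lemma ones_quad: "onesv \<bullet> (A *v onesv) = (\<Sum>j\<in>UNIV. \<Sum>k\<in>UNIV. (A::real^'m^'m) $ j $ k)"
  by (simp add: inner_vec_def onesv_def matrix_vector_mult_def)

lemma exch_sum: "(\<Sum>j\<in>UNIV. \<Sum>k\<in>UNIV. (exch r :: real^'m^'m) $ j $ k) = real CARD('m) * (1 + (real CARD('m) - 1) * r)"
  by (simp add: exch_def sum_if_eq)

lemma indep_integral:
  fixes X :: "'w \<Rightarrow> 'x" and g :: "'x \<Rightarrow> real"
  assumes P: "prob_space M" and X: "X \<in> measurable M S" and E: "E \<in> sets M"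
    and ind: "\<forall>B\<in>sets S. measure M {\<omega>\<in>space M. \<omega> \<in> E \<and> X \<omega> \<in> B} = measure M E * measure M {\<omega>\<in>space M. X \<omega> \<in> B}"
    and g: "g \<in> borel_measurable S"
  shows "(\<integral>\<omega>. indicator E \<omega> * g (X \<omega>) \<partial>M) = measure M E * (\<integral>\<omega>. g (X \<omega>) \<partial>M)"
proof -
  interpret prob_space M by (rule P)
  define c where "c = measure M E"
  have c0: "c \<ge> 0" unfolding c_def by simp
  define N1 where "N1 = distr (density M (\<lambda>x. ennreal (indicator E x))) S X"
  define N2 where "N2 = density (distr M S X) (\<lambda>_. ennreal c)"
  have "N1 = N2"
  proof (rule measure_eqI)
    show "sets N1 = sets N2" unfolding N1_def N2_def by simp
    fix B assume "B \<in> sets N1"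
    hence B: "B \<in> sets S" unfolding N1_def by simp
    have XB: "X -` B \<inter> space M \<in> sets M" using X B by (rule measurable_sets)
    have "emeasure N1 B = emeasure (density M (indicator E)) (X -` B \<inter> space M)"
      unfolding N1_def using X B by (simp add: emeasure_distr ennreal_indicator)
    also have "\<dots> = emeasure M (E \<inter> (X -` B \<inter> space M))" by (rule emeasure_restricted[OF E XB])
    also have "\<dots> = ennreal (measure M {\<omega>\<in>space M. \<omega> \<in> E \<and> X \<omega> \<in> B})"
      by (simp add: emeasure_eq_measure) (rule arg_cong[where f="\<lambda>A. measure M A"], auto)
    also have "\<dots> = ennreal (c * measure M (X -` B \<inter> space M))"
      using ind B unfolding c_def by (simp add: vimage_def Int_def conj_commute)
    also have "\<dots> = ennreal c * emeasure (distr M S X) B"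
      using X B c0 by (simp add: emeasure_distr emeasure_eq_measure ennreal_mult)
    also have "\<dots> = emeasure N2 B" unfolding N2_def using B by (simp add: emeasure_density_const)
    finally show "emeasure N1 B = emeasure N2 B" .
  qed
  have EM: "indicator E \<in> borel_measurable M" using E by simp
  have "(\<integral>\<omega>. indicator E \<omega> * g (X \<omega>) \<partial>M) = (\<integral>\<omega>. g (X \<omega>) \<partial>density M (\<lambda>x. ennreal (indicator E x)))"
    using E X g by (subst integral_density) (auto intro: measurable_compose)
  also have "\<dots> = integral\<^sup>L N1 g" unfolding N1_def using X g by (subst integral_distr) auto
  also have "\<dots> = integral\<^sup>L N2 g" using \<open>N1 = N2\<close> by simp
  also have "\<dots> = (\<integral>z. c * g z \<partial>distr M S X)" unfolding N2_def using X g c0 by (subst integral_density) auto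
  also have "\<dots> = c * (\<integral>\<omega>. g (X \<omega>) \<partial>M)" using X g by (subst integral_distr) auto
  finally show ?thesis unfolding c_def .
qed

definition selY :: "int \<Rightarrow> int \<Rightarrow> ('v \<times> 'v \<times> 'v \<times> 'v) \<Rightarrow> 'v" where
  "selY a1 a2 y = (if a1 = 1 then (if a2 = 1 then fst y else fst (snd y))
                   else (if a2 = 1 then fst (snd (snd y)) else snd (snd (snd y))))"

definition rsel :: "int \<Rightarrow> bool \<times> bool \<Rightarrow> bool" where
  "rsel a1 rr = (if a1 = 1 then fst rr else snd rr)"

lemma comp_meas: "f \<in> borel_measurable M \<Longrightarrow> (\<lambda>\<omega>. (f \<omega> :: real^'n) $ j) \<in> borel_measurable M"
  by (rule measurable_compose[OF _ borel_measurable_continuous_onI[OF linear_continuous_on[OF bounded_linear_vec_nth]]])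

lemma selY_cont: "continuous_on UNIV (selY a1 a2 :: ('v::topological_space \<times> 'v \<times> 'v \<times> 'v) \<Rightarrow> 'v)"
proof -
  have c1: "continuous_on UNIV (\<lambda>y::('v \<times> 'v \<times> 'v \<times> 'v). fst y)"
    by (rule continuous_on_fst[OF continuous_on_id])
  have c2: "continuous_on UNIV (\<lambda>y::('v \<times> 'v \<times> 'v \<times> 'v). fst (snd y))"
    by (rule continuous_on_fst[OF continuous_on_snd[OF continuous_on_id]])
  have c3: "continuous_on UNIV (\<lambda>y::('v \<times> 'v \<times> 'v \<times> 'v). fst (snd (snd y)))"
    by (rule continuous_on_fst[OF continuous_on_snd[OF continuous_on_snd[OF continuous_on_id]]])
  have c4: "continuous_on UNIV (\<lambda>y::('v \<times> 'v \<times> 'v \<times> 'v). snd (snd (snd y)))"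
    by (rule continuous_on_snd[OF continuous_on_snd[OF continuous_on_snd[OF continuous_on_id]]])
  have e: "selY a1 a2 = (if a1 = 1 then (if a2 = 1 then (\<lambda>y. fst y) else (\<lambda>y. fst (snd y)))
     else (if a2 = 1 then (\<lambda>y. fst (snd (snd y))) else (\<lambda>y. snd (snd (snd y)))))"
    unfolding selY_def by (simp add: fun_eq_iff)
  show ?thesis unfolding e using c1 c2 c3 c4 by simp
qed

lemma Tz_meas:
  "(\<lambda>z. (\<Sum>j\<in>UNIV. (selY a1 a2 (fst z) $ j - b))::real) \<in> borel_measurable (borel \<Otimes>\<^sub>M (N::'b measure))"
proof -
  have "(\<lambda>z. selY a1 a2 (fst z) :: real^'m) \<in> borel_measurable (borel \<Otimes>\<^sub>M N)"
    by (rule measurable_compose[OF measurable_fst borel_measurable_continuous_onI[OF selY_cont]])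
  thus ?thesis by (intro borel_measurable_sum borel_measurable_diff comp_meas borel_measurable_const)
qed

lemma snd_meas: "(\<lambda>z. h (snd z) :: real) \<in> borel_measurable (M \<Otimes>\<^sub>M count_space UNIV)"
  by (rule measurable_compose[OF measurable_snd]) simp

lemma sum_pm1: "a \<in> {1, -1::int} \<Longrightarrow> (\<Sum>x\<in>{1,-1::int}. f x) = f a + f (-a)"
  by (auto simp: add.commute)

lemma integral_sum2:
  fixes G :: "int \<Rightarrow> int \<Rightarrow> 'w \<Rightarrow> real"
  assumes "\<And>x y. x \<in> {1,-1} \<Longrightarrow> y \<in> {1,-1} \<Longrightarrow> integrable M (G x y)"
  shows "(\<integral>\<omega>. (\<Sum>x\<in>{1,-1::int}. \<Sum>y\<in>{1,-1::int}. G x y \<omega>) \<partial>M) = (\<Sum>x\<in>{1,-1::int}. \<Sum>y\<in>{1,-1::int}. \<integral>\<omega>. G x y \<omega> \<partial>M)"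
proof -
  have "(\<integral>\<omega>. (\<Sum>x\<in>{1,-1::int}. \<Sum>y\<in>{1,-1::int}. G x y \<omega>) \<partial>M) = (\<Sum>x\<in>{1,-1::int}. \<integral>\<omega>. (\<Sum>y\<in>{1,-1::int}. G x y \<omega>) \<partial>M)"
    using assms by (intro Bochner_Integration.integral_sum[where f="\<lambda>x \<omega>. \<Sum>y\<in>{1,-1::int}. G x y \<omega>"] integrable_sum) auto
  also have "\<dots> = (\<Sum>x\<in>{1,-1::int}. \<Sum>y\<in>{1,-1::int}. \<integral>\<omega>. G x y \<omega> \<partial>M)"
    using assms by (intro sum.cong refl integral_sum) auto
  finally show ?thesis .
qed

lemma prod_integrable:
  fixes f g :: "'w \<Rightarrow> real"
  assumes "f \<in> borel_measurable M" "g \<in> borel_measurable M" "integrable M (\<lambda>x. (f x)\<^sup>2)" "integrable M (\<lambda>x. (g x)\<^sup>2)"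
  shows "integrable M (\<lambda>x. f x * g x)"
proof (rule Bochner_Integration.integrable_bound[where f="\<lambda>x. (f x)\<^sup>2 + (g x)\<^sup>2"])
  show "integrable M (\<lambda>x. (f x)\<^sup>2 + (g x)\<^sup>2)" using assms by auto
  show "(\<lambda>x. f x * g x) \<in> borel_measurable M" using assms by auto
  show "AE x in M. norm (f x * g x) \<le> norm ((f x)\<^sup>2 + (g x)\<^sup>2)"
  proof (rule AE_I2)
    fix x
    have "\<bar>f x * g x\<bar> \<le> (f x)\<^sup>2 + (g x)\<^sup>2"
    proof -
      have a: "2 * (\<bar>f x\<bar> * \<bar>g x\<bar>) \<le> (f x)\<^sup>2 + (g x)\<^sup>2"
        using sum_squares_bound[of "\<bar>f x\<bar>" "\<bar>g x\<bar>"] by (simp add: mult.assoc)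
      have b: "0 \<le> \<bar>f x\<bar> * \<bar>g x\<bar>" by simp
      show ?thesis using a b by (simp only: abs_mult)
    qed
    thus "norm (f x * g x) \<le> norm ((f x)\<^sup>2 + (g x)\<^sup>2)" by simp
  qed
qed

locale smart =
  fixes M :: "'w measure"
    and A1 A2 :: "'w \<Rightarrow> int" and R :: "'w \<Rightarrow> bool" and Y :: "'w \<Rightarrow> real^'m"
    and Ypo :: "int \<times> int \<Rightarrow> 'w \<Rightarrow> real^'m" and Rpo :: "int \<Rightarrow> 'w \<Rightarrow> bool"
    and \<beta>c :: "int \<times> int \<Rightarrow> real" and p :: "int \<Rightarrow> real"
    and V :: "real^'m^'m" and s r :: real
  assumes M: "prob_space M"
    and A_vals: "\<forall>\<omega>\<in>space M. A1 \<omega> \<in> {1, -1} \<and> A2 \<omega> \<in> {1, -1}"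
    and A_meas: "A1 \<in> measurable M (count_space UNIV)" "A2 \<in> measurable M (count_space UNIV)"
    and Rpo_meas: "\<forall>a1. Rpo a1 \<in> measurable M (count_space UNIV)"
    and Ypo_meas: "\<forall>d. Ypo d \<in> borel_measurable M"
    and randomization: "\<forall>a1\<in>{1,-1}. \<forall>a2\<in>{1,-1}.
          measure M {\<omega>\<in>space M. A1 \<omega> = a1 \<and> A2 \<omega> = a2} = 1/4"
    and independence: "\<forall>a1 a2. \<forall>B\<in>sets (borel \<Otimes>\<^sub>M count_space UNIV).
          measure M {\<omega>\<in>space M. A1 \<omega> = a1 \<and> A2 \<omega> = a2 \<and>
             ((Ypo (1,1) \<omega>, Ypo (1,-1) \<omega>, Ypo (-1,1) \<omega>, Ypo (-1,-1) \<omega>), (Rpo 1 \<omega>, Rpo (-1) \<omega>)) \<in> B}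
          = measure M {\<omega>\<in>space M. A1 \<omega> = a1 \<and> A2 \<omega> = a2}
            * measure M {\<omega>\<in>space M.
             ((Ypo (1,1) \<omega>, Ypo (1,-1) \<omega>, Ypo (-1,1) \<omega>, Ypo (-1,-1) \<omega>), (Rpo 1 \<omega>, Rpo (-1) \<omega>)) \<in> B}"
    and consistency_R: "\<forall>\<omega>\<in>space M. R \<omega> = Rpo (A1 \<omega>) \<omega>"
    and consistency_Y: "\<forall>a1\<in>{1,-1}. \<forall>a2\<in>{1,-1}. \<forall>\<omega>\<in>space M.
          A1 \<omega> = a1 \<and> (R \<omega> \<or> (\<not> R \<omega> \<and> A2 \<omega> = a2)) \<longrightarrow> Y \<omega> = Ypo (a1, a2) \<omega>"
    and second_moments: "\<forall>a1\<in>{1,-1}. \<forall>a2\<in>{1,-1}. \<forall>j.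
          integrable M (\<lambda>\<omega>. (Ypo (a1, a2) \<omega> $ j)\<^sup>2)"
    and mean_model: "\<forall>a1\<in>{1,-1}. \<forall>a2\<in>{1,-1}. \<forall>j.
          integral\<^sup>L M (\<lambda>\<omega>. Ypo (a1, a2) \<omega> $ j) = \<beta>c (a1, a2)"
    and p_def: "\<forall>a1\<in>{1,-1}. p a1 =
          measure M {\<omega>\<in>space M. R \<omega> \<and> A1 \<omega> = a1} / measure M {\<omega>\<in>space M. A1 \<omega> = a1}"
    and V_def: "V = s\<^sup>2 *\<^sub>R exch r"
    and V_pd: "pos_def V"
begin

abbreviation XX where
  "XX \<equiv> \<lambda>\<omega>. ((Ypo (1,1) \<omega>, Ypo (1,-1) \<omega>, Ypo (-1,1) \<omega>, Ypo (-1,-1) \<omega>), (Rpo 1 \<omega>, Rpo (-1) \<omega>))"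

abbreviation SS :: "(((real^'m) \<times> (real^'m) \<times> (real^'m) \<times> (real^'m)) \<times> (bool \<times> bool)) measure" where
  "SS \<equiv> borel \<Otimes>\<^sub>M count_space UNIV"

lemma pm1: "a \<in> {1, -1::int} \<Longrightarrow> a = 1 \<or> a = -1" by auto

lemma XX_selY: "a1 \<in> {1,-1} \<Longrightarrow> a2 \<in> {1,-1} \<Longrightarrow> selY a1 a2 (fst (XX \<omega>)) = Ypo (a1, a2) \<omega>"
  unfolding selY_def by (cases "a1 = 1"; cases "a2 = 1") auto

lemma XX_rsel: "a1 \<in> {1,-1} \<Longrightarrow> rsel a1 (snd (XX \<omega>)) = Rpo a1 \<omega>"
  unfolding rsel_def by (cases "a1 = 1") auto

lemma XX_meas: "XX \<in> measurable M SS"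
proof -
  have cs: "(count_space UNIV :: (bool\<times>bool) measure) = count_space UNIV \<Otimes>\<^sub>M count_space UNIV"
    by (simp add: pair_measure_countable)
  have "(\<lambda>\<omega>. (Rpo 1 \<omega>, Rpo (-1) \<omega>)) \<in> measurable M (count_space UNIV)"
    unfolding cs using Rpo_meas by (intro measurable_Pair) auto
  moreover have "(\<lambda>\<omega>. (Ypo (1,1) \<omega>, Ypo (1,-1) \<omega>, Ypo (-1,1) \<omega>, Ypo (-1,-1) \<omega>)) \<in> borel_measurable M"
    using Ypo_meas by (intro borel_measurable_Pair) auto
  ultimately show ?thesis by (intro measurable_Pair)
qed

lemma E_sets: "{\<omega>\<in>space M. A1 \<omega> = x \<and> A2 \<omega> = y} \<in> sets M"
proof -
  note A_meas[measurable]
  have "{\<omega>\<in>space M. A1 \<omega> = x \<and> A2 \<omega> = y} = (A1 -` {x} \<inter> space M) \<inter> (A2 -` {y} \<inter> space M)" by auto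
  also have "\<dots> \<in> sets M" using measurable_sets[OF A_meas(1), of "{x}"] measurable_sets[OF A_meas(2), of "{y}"] by auto
  finally show ?thesis .
qed

lemma core:
  fixes g :: "_ \<Rightarrow> real"
  assumes x: "x \<in> {1,-1}" and y: "y \<in> {1,-1}" and g: "g \<in> borel_measurable SS"
  shows "(\<integral>\<omega>. indicator {\<omega>\<in>space M. A1 \<omega> = x \<and> A2 \<omega> = y} \<omega> * g (XX \<omega>) \<partial>M) = 1/4 * (\<integral>\<omega>. g (XX \<omega>) \<partial>M)"
proof -
  let ?E = "{\<omega>\<in>space M. A1 \<omega> = x \<and> A2 \<omega> = y}"
  have ind: "\<forall>B\<in>sets SS. measure M {\<omega>\<in>space M. \<omega> \<in> ?E \<and> XX \<omega> \<in> B} = measure M ?E * measure M {\<omega>\<in>space M. XX \<omega> \<in> B}"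
  proof
    fix B assume B: "B \<in> sets SS"
    have "{\<omega>\<in>space M. \<omega> \<in> ?E \<and> XX \<omega> \<in> B} = {\<omega>\<in>space M. A1 \<omega> = x \<and> A2 \<omega> = y \<and> XX \<omega> \<in> B}" by auto
    moreover have "measure M {\<omega>\<in>space M. A1 \<omega> = x \<and> A2 \<omega> = y \<and> XX \<omega> \<in> B} = measure M ?E * measure M {\<omega>\<in>space M. XX \<omega> \<in> B}"
      by (rule independence[rule_format, OF B])
    ultimately show "measure M {\<omega>\<in>space M. \<omega> \<in> ?E \<and> XX \<omega> \<in> B} = measure M ?E * measure M {\<omega>\<in>space M. XX \<omega> \<in> B}"
      by simp
  qed
  have "(\<integral>\<omega>. indicator ?E \<omega> * g (XX \<omega>) \<partial>M) = measure M ?E * (\<integral>\<omega>. g (XX \<omega>) \<partial>M)"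
    by (rule indep_integral[OF M XX_meas E_sets ind g])
  also have "measure M ?E = 1/4" using randomization x y by blast
  finally show ?thesis .
qed

lemma sum_delta_pm: "a \<in> {1,-1::int} \<Longrightarrow> b \<in> {1,-1::int} \<Longrightarrow>
   (\<Sum>x\<in>{1,-1::int}. \<Sum>y\<in>{1,-1::int}. (if x = a \<and> y = b then G x y else 0)) = (G a b :: real)"
  by (cases "a = 1"; cases "b = 1") simp_all

lemma decomp:
  fixes F :: "int \<Rightarrow> int \<Rightarrow> (((real^'m) \<times> (real^'m) \<times> (real^'m) \<times> (real^'m)) \<times> (bool \<times> bool)) \<Rightarrow> real"
  assumes Fm: "\<And>x y. x \<in> {1,-1} \<Longrightarrow> y \<in> {1,-1} \<Longrightarrow> F x y \<in> borel_measurable SS"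
    and Fi: "\<And>x y. x \<in> {1,-1} \<Longrightarrow> y \<in> {1,-1} \<Longrightarrow> integrable M (\<lambda>\<omega>. F x y (XX \<omega>))"
  shows "(\<integral>\<omega>. F (A1 \<omega>) (A2 \<omega>) (XX \<omega>) \<partial>M) = 1/4 * (\<integral>\<omega>. (\<Sum>x\<in>{1,-1::int}. \<Sum>y\<in>{1,-1::int}. F x y (XX \<omega>)) \<partial>M)"
proof -
  let ?E = "\<lambda>x y. {\<omega>\<in>space M. A1 \<omega> = x \<and> A2 \<omega> = y}"
  have "(\<integral>\<omega>. F (A1 \<omega>) (A2 \<omega>) (XX \<omega>) \<partial>M) = (\<integral>\<omega>. (\<Sum>x\<in>{1,-1::int}. \<Sum>y\<in>{1,-1::int}. indicator (?E x y) \<omega> * F x y (XX \<omega>)) \<partial>M)"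
  proof (rule Bochner_Integration.integral_cong[OF refl])
    fix \<omega> assume w: "\<omega> \<in> space M"
    have ab: "A1 \<omega> \<in> {1,-1}" "A2 \<omega> \<in> {1,-1}" using A_vals w by auto
    have "\<And>x y. indicator (?E x y) \<omega> * F x y (XX \<omega>) = (if x = A1 \<omega> \<and> y = A2 \<omega> then F x y (XX \<omega>) else 0)"
      using w by (auto simp: indicator_def)
    hence "(\<Sum>x\<in>{1,-1::int}. \<Sum>y\<in>{1,-1::int}. indicator (?E x y) \<omega> * F x y (XX \<omega>))
        = (\<Sum>x\<in>{1,-1::int}. \<Sum>y\<in>{1,-1::int}. (if x = A1 \<omega> \<and> y = A2 \<omega> then F x y (XX \<omega>) else 0))"
      by presburger
    also have "\<dots> = F (A1 \<omega>) (A2 \<omega>) (XX \<omega>)" by (rule sum_delta_pm[OF ab])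
    finally show "F (A1 \<omega>) (A2 \<omega>) (XX \<omega>) = (\<Sum>x\<in>{1,-1::int}. \<Sum>y\<in>{1,-1::int}. indicator (?E x y) \<omega> * F x y (XX \<omega>))"
      by simp
  qed
  also have "\<dots> = (\<Sum>x\<in>{1,-1::int}. \<Sum>y\<in>{1,-1::int}. \<integral>\<omega>. indicator (?E x y) \<omega> * F x y (XX \<omega>) \<partial>M)"
  proof (rule integral_sum2)
    fix x y :: int assume xy: "x \<in> {1,-1}" "y \<in> {1,-1}"
    have "integrable M (\<lambda>\<omega>. F x y (XX \<omega>) * indicator (?E x y) \<omega>)"
      by (rule integrable_real_mult_indicator[OF E_sets Fi[OF xy]])
    thus "integrable M (\<lambda>\<omega>. indicator (?E x y) \<omega> * F x y (XX \<omega>))" by (simp add: mult.commute)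
  qed
  also have "\<dots> = (\<Sum>x\<in>{1,-1::int}. \<Sum>y\<in>{1,-1::int}. 1/4 * \<integral>\<omega>. F x y (XX \<omega>) \<partial>M)"
  proof (rule sum.cong[OF refl], rule sum.cong[OF refl])
    fix x y :: int assume xy: "x \<in> {1,-1}" "y \<in> {1,-1}"
    show "(\<integral>\<omega>. indicator (?E x y) \<omega> * F x y (XX \<omega>) \<partial>M) = 1/4 * \<integral>\<omega>. F x y (XX \<omega>) \<partial>M"
      by (rule core[OF xy Fm[OF xy]])
  qed
  also have "\<dots> = 1/4 * (\<Sum>x\<in>{1,-1::int}. \<Sum>y\<in>{1,-1::int}. \<integral>\<omega>. F x y (XX \<omega>) \<partial>M)"
    by (simp only: sum_distrib_left)
  also have "(\<Sum>x\<in>{1,-1::int}. \<Sum>y\<in>{1,-1::int}. \<integral>\<omega>. F x y (XX \<omega>) \<partial>M) = (\<integral>\<omega>. (\<Sum>x\<in>{1,-1::int}. \<Sum>y\<in>{1,-1::int}. F x y (XX \<omega>)) \<partial>M)"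
    by (rule integral_sum2[symmetric]) (rule Fi)
  finally show ?thesis .
qed

end

definition IW :: "int \<Rightarrow> int \<Rightarrow> int \<Rightarrow> int \<Rightarrow> bool \<times> bool \<Rightarrow> real" where
  "IW x y a1 a2 rr = (if x = a1 \<and> (rsel x rr \<or> y = a2) then 1 else 0) * (if rsel x rr then 2 else 4)"

lemma enc_dtr: "a1 \<in> {1,-1} \<Longrightarrow> enc (fst (dtr_of a1 a2)) = a1" "a2 \<in> {1,-1} \<Longrightarrow> enc (snd (dtr_of a1 a2)) = a2"
  by (auto simp: enc_def dtr_of_def)

lemma dtr_enc: "dtr_of (enc b1) (enc b2) = (b1, b2)" "enc b \<in> {1,-1}"
  by (auto simp: enc_def dtr_of_def)

lemma sumIW: "a1 \<in> {1,-1} \<Longrightarrow> a2 \<in> {1,-1} \<Longrightarrow> (\<Sum>x\<in>{1,-1::int}. \<Sum>y\<in>{1,-1::int}. IW x y a1 a2 rr) = 4"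
  by (auto simp: IW_def rsel_def)

lemma sumIW2: "a1 \<in> {1,-1} \<Longrightarrow> a2 \<in> {1,-1} \<Longrightarrow>
   (\<Sum>x\<in>{1,-1::int}. \<Sum>y\<in>{1,-1::int}. (IW x y a1 a2 rr)\<^sup>2) = (if rsel a1 rr then 8 else 16)"
  by (auto simp: IW_def rsel_def)

lemma IW_bound: "\<bar>IW x y a1 a2 rr\<bar> \<le> 4" by (auto simp: IW_def)

lemma sum_delta_pair:
  fixes d d' :: "'a::finite"
  shows "(\<Sum>e\<in>UNIV. f e * (if d = e \<and> d' = e then c else 0)) = (if d = d' then f d * c else (0::real))"
proof (cases "d = d'")
  case True
  have "(\<Sum>e\<in>UNIV. f e * (if d = e \<and> d' = e then c else 0)) = (\<Sum>e\<in>UNIV. if e = d then f e * c else 0)"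
    using True by (intro sum.cong) auto
  then show ?thesis using True by (simp add: sum.delta)
next
  case False
  then show ?thesis by (auto intro: sum.neutral)
qed


context smart
begin

lemma Rform: "\<omega> \<in> space M \<Longrightarrow> R \<omega> = rsel (A1 \<omega>) (snd (XX \<omega>))"
  using consistency_R A_vals XX_rsel by simp

lemma IndW:
  assumes w: "\<omega> \<in> space M" and a1: "a1 \<in> {1,-1}" and a2: "a2 \<in> {1,-1}"
  shows "Ind A1 A2 R (dtr_of a1 a2) \<omega> * Wt R \<omega> = IW (A1 \<omega>) (A2 \<omega>) a1 a2 (snd (XX \<omega>))"
  unfolding Ind_def Wt_def IW_def enc_dtr[OF a1] enc_dtr[OF a2] Rform[OF w, symmetric] by auto

lemma bounded_int:
  fixes B :: real
  assumes "f \<in> borel_measurable M" "\<And>\<omega>. \<bar>f \<omega>\<bar> \<le> B"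
  shows "integrable M f"
proof -
  interpret prob_space M by (rule M)
  show ?thesis using assms by (intro integrable_const_bound[where B=B]) auto
qed

lemma IW_meas: "(\<lambda>\<omega>. IW x y a1 a2 (snd (XX \<omega>))) \<in> borel_measurable M"
  by (rule measurable_compose[OF XX_meas snd_meas])

lemma Jint:
  assumes a1: "a1 \<in> {1,-1}" and a2: "a2 \<in> {1,-1}"
  shows "(\<integral>\<omega>. Ind A1 A2 R (dtr_of a1 a2) \<omega> * Wt R \<omega> \<partial>M) = 1"
proof -
  interpret prob_space M by (rule M)
  have "(\<integral>\<omega>. Ind A1 A2 R (dtr_of a1 a2) \<omega> * Wt R \<omega> \<partial>M) = (\<integral>\<omega>. IW (A1 \<omega>) (A2 \<omega>) a1 a2 (snd (XX \<omega>)) \<partial>M)"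
    by (rule Bochner_Integration.integral_cong[OF refl]) (rule IndW[OF _ a1 a2])
  also have "\<dots> = 1/4 * (\<integral>\<omega>. (\<Sum>x\<in>{1,-1::int}. \<Sum>y\<in>{1,-1::int}. IW x y a1 a2 (snd (XX \<omega>))) \<partial>M)"
    by (rule decomp[where F="\<lambda>x y z. IW x y a1 a2 (snd z)"])
       (rule snd_meas, rule bounded_int[OF IW_meas IW_bound])
  also have "\<dots> = 1" using sumIW[OF a1 a2] by (simp add: prob_space.prob_space[OF M])
  finally show ?thesis .
qed

lemma Jint_all: "(\<integral>\<omega>. Ind A1 A2 R d \<omega> * Wt R \<omega> \<partial>M) = 1"
proof -
  obtain b1 b2 where d: "d = (b1, b2)" by (cases d)
  show ?thesis using Jint[OF dtr_enc(2) dtr_enc(2), of b1 b2] unfolding d dtr_enc(1) .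
qed

end

context smart
begin

lemma Z_meas: "(\<lambda>\<omega>. Ypo d \<omega> $ j) \<in> borel_measurable M"
proof -
  have "Ypo d \<in> borel_measurable M" using Ypo_meas by blast
  thus ?thesis by (rule comp_meas)
qed

lemma Zc_sq_int:
  assumes a1: "a1 \<in> {1,-1}" and a2: "a2 \<in> {1,-1}"
  shows "integrable M (\<lambda>\<omega>. (Ypo (a1,a2) \<omega> $ j - b)\<^sup>2)"
proof -
  interpret prob_space M by (rule M)
  have sq: "integrable M (\<lambda>\<omega>. (Ypo (a1,a2) \<omega> $ j)\<^sup>2)" using second_moments a1 a2 by blast
  have l: "integrable M (\<lambda>\<omega>. Ypo (a1,a2) \<omega> $ j)"
    by (rule square_integrable_imp_integrable[OF Z_meas sq])
  have "integrable M (\<lambda>\<omega>. (Ypo (a1,a2) \<omega> $ j)\<^sup>2 - 2 * b * Ypo (a1,a2) \<omega> $ j + b\<^sup>2)"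
    using sq l by (intro Bochner_Integration.integrable_add Bochner_Integration.integrable_diff
        Bochner_Integration.integrable_mult_right integrable_const) auto
  moreover have "(\<lambda>\<omega>. (Ypo (a1,a2) \<omega> $ j - b)\<^sup>2) = (\<lambda>\<omega>. (Ypo (a1,a2) \<omega> $ j)\<^sup>2 - 2 * b * Ypo (a1,a2) \<omega> $ j + b\<^sup>2)"
    by (auto simp: fun_eq_iff power2_diff algebra_simps)
  ultimately show ?thesis by simp
qed

lemma ZZ_int:
  assumes a1: "a1 \<in> {1,-1}" and a2: "a2 \<in> {1,-1}"
  shows "integrable M (\<lambda>\<omega>. (Ypo (a1,a2) \<omega> $ j - b) * (Ypo (a1,a2) \<omega> $ k - b))"
  by (rule prod_integrable) (auto intro!: Zc_sq_int[OF a1 a2] borel_measurable_diff Z_meas)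

lemma sq_sum: "(\<Sum>j\<in>UNIV. u j)\<^sup>2 = (\<Sum>j\<in>(UNIV::'n::finite set). \<Sum>k\<in>UNIV. u j * u k :: real)"
  by (simp add: power2_eq_square sum_product)

lemma Tsq_int:
  assumes a1: "a1 \<in> {1,-1}" and a2: "a2 \<in> {1,-1}"
  shows "integrable M (\<lambda>\<omega>. (\<Sum>j\<in>UNIV. Ypo (a1,a2) \<omega> $ j - b)\<^sup>2)"
  unfolding sq_sum by (intro Bochner_Integration.integrable_sum ZZ_int[OF a1 a2])

lemma Tsq_integral:
  assumes a1: "a1 \<in> {1,-1}" and a2: "a2 \<in> {1,-1}"
  and gi: "\<And>j k. integrable M (\<lambda>\<omega>. g \<omega> * ((Ypo (a1,a2) \<omega> $ j - b) * (Ypo (a1,a2) \<omega> $ k - b)))"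
  shows "(\<integral>\<omega>. g \<omega> * (\<Sum>j\<in>UNIV. Ypo (a1,a2) \<omega> $ j - b)\<^sup>2 \<partial>M)
       = (\<Sum>j\<in>UNIV. \<Sum>k\<in>UNIV. \<integral>\<omega>. g \<omega> * ((Ypo (a1,a2) \<omega> $ j - b) * (Ypo (a1,a2) \<omega> $ k - b)) \<partial>M)"
proof -
  have "(\<integral>\<omega>. g \<omega> * (\<Sum>j\<in>UNIV. Ypo (a1,a2) \<omega> $ j - b)\<^sup>2 \<partial>M)
     = (\<integral>\<omega>. (\<Sum>j\<in>UNIV. \<Sum>k\<in>UNIV. g \<omega> * ((Ypo (a1,a2) \<omega> $ j - b) * (Ypo (a1,a2) \<omega> $ k - b))) \<partial>M)"
    unfolding sq_sum by (simp add: sum_distrib_left)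
  also have "\<dots> = (\<Sum>j\<in>UNIV. \<integral>\<omega>. (\<Sum>k\<in>UNIV. g \<omega> * ((Ypo (a1,a2) \<omega> $ j - b) * (Ypo (a1,a2) \<omega> $ k - b))) \<partial>M)"
    by (intro Bochner_Integration.integral_sum Bochner_Integration.integrable_sum gi)
  also have "\<dots> = (\<Sum>j\<in>UNIV. \<Sum>k\<in>UNIV. \<integral>\<omega>. g \<omega> * ((Ypo (a1,a2) \<omega> $ j - b) * (Ypo (a1,a2) \<omega> $ k - b)) \<partial>M)"
    by (intro sum.cong refl Bochner_Integration.integral_sum gi)
  finally show ?thesis .
qed

lemma cov_sum:
  assumes a1: "a1 \<in> {1,-1}" and a2: "a2 \<in> {1,-1}"
  shows "(\<Sum>j\<in>UNIV. \<Sum>k\<in>UNIV. covmat M (Ypo (a1,a2)) $ j $ k)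
      = (\<integral>\<omega>. (\<Sum>j\<in>UNIV. Ypo (a1,a2) \<omega> $ j - \<beta>c (a1,a2))\<^sup>2 \<partial>M)"
proof -
  have mm: "\<And>j. integral\<^sup>L M (\<lambda>\<omega>. Ypo (a1, a2) \<omega> $ j) = \<beta>c (a1, a2)" using mean_model a1 a2 by blast
  have "(\<integral>\<omega>. (\<Sum>j\<in>UNIV. Ypo (a1,a2) \<omega> $ j - \<beta>c (a1,a2))\<^sup>2 \<partial>M)
     = (\<integral>\<omega>. 1 * (\<Sum>j\<in>UNIV. Ypo (a1,a2) \<omega> $ j - \<beta>c (a1,a2))\<^sup>2 \<partial>M)" by simp
  also have "\<dots> = (\<Sum>j\<in>UNIV. \<Sum>k\<in>UNIV. \<integral>\<omega>. 1 * ((Ypo (a1,a2) \<omega> $ j - \<beta>c (a1,a2)) * (Ypo (a1,a2) \<omega> $ k - \<beta>c (a1,a2))) \<partial>M)"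
    by (rule Tsq_integral[OF a1 a2]) (simp add: ZZ_int[OF a1 a2])
  also have "\<dots> = (\<Sum>j\<in>UNIV. \<Sum>k\<in>UNIV. covmat M (Ypo (a1,a2)) $ j $ k)"
    unfolding covmat_def by (simp add: mm)
  finally show ?thesis by simp
qed

lemma cond_sum:
  assumes a1: "a1 \<in> {1,-1}" and a2: "a2 \<in> {1,-1}" and N: "N \<in> sets M"
  shows "(\<Sum>j\<in>UNIV. \<Sum>k\<in>UNIV. cond_moment M (Ypo (a1,a2)) (\<beta>c (a1,a2)) N $ j $ k)
      = (\<integral>\<omega>. indicator N \<omega> * (\<Sum>j\<in>UNIV. Ypo (a1,a2) \<omega> $ j - \<beta>c (a1,a2))\<^sup>2 \<partial>M) / measure M N"
proof -
  have "(\<integral>\<omega>. indicator N \<omega> * (\<Sum>j\<in>UNIV. Ypo (a1,a2) \<omega> $ j - \<beta>c (a1,a2))\<^sup>2 \<partial>M)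
     = (\<Sum>j\<in>UNIV. \<Sum>k\<in>UNIV. \<integral>\<omega>. indicator N \<omega> * ((Ypo (a1,a2) \<omega> $ j - \<beta>c (a1,a2)) * (Ypo (a1,a2) \<omega> $ k - \<beta>c (a1,a2))) \<partial>M)"
  proof (rule Tsq_integral[OF a1 a2])
    fix j k
    have "integrable M (\<lambda>\<omega>. ((Ypo (a1,a2) \<omega> $ j - \<beta>c (a1,a2)) * (Ypo (a1,a2) \<omega> $ k - \<beta>c (a1,a2))) * indicator N \<omega>)"
      by (rule integrable_real_mult_indicator[OF N ZZ_int[OF a1 a2]])
    thus "integrable M (\<lambda>\<omega>. indicator N \<omega> * ((Ypo (a1,a2) \<omega> $ j - \<beta>c (a1,a2)) * (Ypo (a1,a2) \<omega> $ k - \<beta>c (a1,a2))))"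
      by (simp add: mult.commute)
  qed
  thus ?thesis unfolding cond_moment_def by (simp add: sum_divide_distrib)
qed

end

lemma IW_sq: "(IW x y a1 a2 rr)\<^sup>2 \<le> 16" by (auto simp: IW_def)

context smart
begin

lemma c0_pos: "0 < (s\<^sup>2 * (1 + (real CARD('m) - 1) * r))" by (rule Vinv_sum(1)[OF V_def V_pd])

lemma cV_val: "(\<Sum>j\<in>UNIV. \<Sum>k\<in>UNIV. matrix_inv V $ j $ k) = real CARD('m) / (s\<^sup>2 * (1 + (real CARD('m) - 1) * r))"
proof -
  have "\<And>j. (\<Sum>k\<in>UNIV. matrix_inv V $ j $ k) = (matrix_inv V *v onesv) $ j"
    by (simp add: matrix_vector_mult_def onesv_def)
  hence "(\<Sum>j\<in>UNIV. \<Sum>k\<in>UNIV. matrix_inv V $ j $ k) = (\<Sum>j\<in>UNIV. (matrix_inv V *v onesv) $ j)" by simp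
  also have "\<dots> = (1/(s\<^sup>2 * (1 + (real CARD('m) - 1) * r))) * (\<Sum>j\<in>UNIV. (onesv :: real^'m) $ j)" by (rule Vinv_sum(2)[OF V_def V_pd])
  also have "\<dots> = real CARD('m) / (s\<^sup>2 * (1 + (real CARD('m) - 1) * r))" by (simp add: onesv_def)
  finally show ?thesis .
qed

lemma Jmat_eq: "Jmat M A1 A2 R V = (\<Sum>j\<in>UNIV. \<Sum>k\<in>UNIV. matrix_inv V $ j $ k) *\<^sub>R mat 1"
proof -
  let ?c = "\<Sum>j\<in>UNIV. \<Sum>k\<in>UNIV. matrix_inv V $ j $ k"
  have "\<And>d d'. Jmat M A1 A2 R V $ d $ d' = (?c *\<^sub>R mat 1) $ d $ d'"
  proof -
    fix d d' :: "bool \<times> bool"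
    have "Jmat M A1 A2 R V $ d $ d' = (\<integral>\<omega>. (if d = d' then Ind A1 A2 R d \<omega> * Wt R \<omega> * ?c else 0) \<partial>M)"
      unfolding Jmat_def by (simp only: vec_lambda_beta Dmat_prod sum_delta_pair)
    also have "\<dots> = (if d = d' then ?c else 0)" using Jint_all[of d] by (cases "d = d'") simp_all
    also have "\<dots> = (?c *\<^sub>R mat 1) $ d $ d'" by (simp add: mat_def)
    finally show "Jmat M A1 A2 R V $ d $ d' = (?c *\<^sub>R mat 1) $ d $ d'" .
  qed
  thus ?thesis by (simp add: vec_eq_iff)
qed

lemma tau2_eq:
  "tau2 M A1 A2 R Y V \<beta>c a1 a2 = ((s\<^sup>2 * (1 + (real CARD('m) - 1) * r)) / real CARD('m))\<^sup>2 *
     (\<integral>\<omega>. (Ufun A1 A2 R Y V (\<lambda>e. \<beta>c (enc (fst e), enc (snd e))) \<omega> $ dtr_of a1 a2)\<^sup>2 \<partial>M)"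
proof -
  have cne: "real CARD('m) / (s\<^sup>2 * (1 + (real CARD('m) - 1) * r)) \<noteq> 0"
  proof -
    have "0 < real CARD('m) / (s\<^sup>2 * (1 + (real CARD('m) - 1) * r))" using c0_pos by (intro divide_pos_pos) simp_all
    thus ?thesis by linarith
  qed
  show ?thesis
    unfolding tau2_def Let_def Jmat_eq cV_val inv_scalar[OF cne] sandwich_scalar
    by (simp add: Amat_def power2_eq_square)
qed

lemma U_sq:
  assumes w: "\<omega> \<in> space M" and a1: "a1 \<in> {1,-1}" and a2: "a2 \<in> {1,-1}"
  shows "(Ufun A1 A2 R Y V (\<lambda>e. \<beta>c (enc (fst e), enc (snd e))) \<omega> $ dtr_of a1 a2)\<^sup>2
     = (1/(s\<^sup>2 * (1 + (real CARD('m) - 1) * r)))\<^sup>2 * ((IW (A1 \<omega>) (A2 \<omega>) a1 a2 (snd (XX \<omega>)))\<^sup>2 * (\<Sum>j\<in>UNIV. Ypo (a1,a2) \<omega> $ j - \<beta>c (a1,a2))\<^sup>2)"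
proof -
  let ?e = "dtr_of a1 a2"
  let ?b = "\<beta>c (a1,a2)"
  let ?I = "Ind A1 A2 R ?e \<omega>"
  have U: "Ufun A1 A2 R Y V (\<lambda>e. \<beta>c (enc (fst e), enc (snd e))) \<omega> $ ?e
      = ?I * Wt R \<omega> * ((1/(s\<^sup>2 * (1 + (real CARD('m) - 1) * r))) * (\<Sum>j\<in>UNIV. (Y \<omega> - ?b *\<^sub>R onesv) $ j))"
    unfolding Ufun_coord Vinv_sum(2)[OF V_def V_pd] enc_dtr[OF a1] enc_dtr[OF a2] ..
  have S: "(\<Sum>j\<in>UNIV. (Y \<omega> - ?b *\<^sub>R onesv) $ j) = (\<Sum>j\<in>UNIV. Y \<omega> $ j - ?b)"
    by (simp add: onesv_def)
  have key: "?I * (\<Sum>j\<in>UNIV. Y \<omega> $ j - ?b) = ?I * (\<Sum>j\<in>UNIV. Ypo (a1,a2) \<omega> $ j - ?b)"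
  proof (cases "?I = 0")
    case False
    hence "A1 \<omega> = a1 \<and> (R \<omega> \<or> (\<not> R \<omega> \<and> A2 \<omega> = a2))"
      unfolding Ind_def enc_dtr[OF a1] enc_dtr[OF a2] by (auto split: if_splits)
    hence "Y \<omega> = Ypo (a1, a2) \<omega>" using consistency_Y a1 a2 w by blast
    thus ?thesis by simp
  qed simp
  have "Ufun A1 A2 R Y V (\<lambda>e. \<beta>c (enc (fst e), enc (snd e))) \<omega> $ ?e
      = Wt R \<omega> * (1/(s\<^sup>2 * (1 + (real CARD('m) - 1) * r))) * (?I * (\<Sum>j\<in>UNIV. Y \<omega> $ j - ?b))"
    unfolding U S by (simp add: algebra_simps)
  also have "\<dots> = Wt R \<omega> * (1/(s\<^sup>2 * (1 + (real CARD('m) - 1) * r))) * (?I * (\<Sum>j\<in>UNIV. Ypo (a1,a2) \<omega> $ j - ?b))" by (simp only: key)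
  also have "\<dots> = (1/(s\<^sup>2 * (1 + (real CARD('m) - 1) * r))) * (?I * Wt R \<omega>) * (\<Sum>j\<in>UNIV. Ypo (a1,a2) \<omega> $ j - ?b)" by (simp add: algebra_simps)
  also have "\<dots> = (1/(s\<^sup>2 * (1 + (real CARD('m) - 1) * r))) * IW (A1 \<omega>) (A2 \<omega>) a1 a2 (snd (XX \<omega>)) * (\<Sum>j\<in>UNIV. Ypo (a1,a2) \<omega> $ j - ?b)"
    by (simp only: IndW[OF w a1 a2])
  finally show ?thesis by (simp add: power_mult_distrib power_divide)
qed

end

context smart
begin

lemma N_sets: "{\<omega>\<in>space M. \<not> Rpo a1 \<omega>} \<in> sets M" "{\<omega>\<in>space M. Rpo a1 \<omega>} \<in> sets M"
proof -
  have m: "Rpo a1 \<in> measurable M (count_space UNIV)" using Rpo_meas by blast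
  have "{\<omega>\<in>space M. \<not> Rpo a1 \<omega>} = Rpo a1 -` {False} \<inter> space M" by auto
  thus "{\<omega>\<in>space M. \<not> Rpo a1 \<omega>} \<in> sets M" using measurable_sets[OF m, of "{False}"] by simp
  have "{\<omega>\<in>space M. Rpo a1 \<omega>} = Rpo a1 -` {True} \<inter> space M" by auto
  thus "{\<omega>\<in>space M. Rpo a1 \<omega>} \<in> sets M" using measurable_sets[OF m, of "{True}"] by simp
qed

lemma A_int:
  assumes a1: "a1 \<in> {1,-1}" and a2: "a2 \<in> {1,-1}"
  shows "(\<integral>\<omega>. (Ufun A1 A2 R Y V (\<lambda>e. \<beta>c (enc (fst e), enc (snd e))) \<omega> $ dtr_of a1 a2)\<^sup>2 \<partial>M)
    = (1/(s\<^sup>2 * (1 + (real CARD('m) - 1) * r)))\<^sup>2 *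
      (2 * (\<integral>\<omega>. (\<Sum>j\<in>UNIV. Ypo (a1,a2) \<omega> $ j - \<beta>c (a1,a2))\<^sup>2 \<partial>M)
     + 2 * (\<integral>\<omega>. indicator {\<omega>\<in>space M. \<not> Rpo a1 \<omega>} \<omega> * (\<Sum>j\<in>UNIV. Ypo (a1,a2) \<omega> $ j - \<beta>c (a1,a2))\<^sup>2 \<partial>M))"
proof -
  let ?k = "(1/(s\<^sup>2 * (1 + (real CARD('m) - 1) * r)))\<^sup>2"
  let ?b = "\<beta>c (a1,a2)"
  let ?T = "\<lambda>\<omega>. (\<Sum>j\<in>UNIV. Ypo (a1,a2) \<omega> $ j - ?b)"
  let ?N = "{\<omega>\<in>space M. \<not> Rpo a1 \<omega>}"
  let ?F = "\<lambda>x y z. (IW x y a1 a2 (snd z))\<^sup>2 * (\<Sum>j\<in>UNIV. selY a1 a2 (fst z) $ j - ?b)\<^sup>2"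
  have Tint: "integrable M (\<lambda>\<omega>. (?T \<omega>)\<^sup>2)" by (rule Tsq_int[OF a1 a2])
  have NTint: "integrable M (\<lambda>\<omega>. indicator ?N \<omega> * (?T \<omega>)\<^sup>2)"
  proof -
    have "integrable M (\<lambda>\<omega>. (?T \<omega>)\<^sup>2 * indicator ?N \<omega>)"
      by (rule integrable_real_mult_indicator[OF N_sets(1) Tint])
    thus ?thesis by (simp add: mult.commute)
  qed
  have Fm: "?F x y \<in> borel_measurable SS" for x y
    by (intro borel_measurable_times borel_measurable_power snd_meas Tz_meas)
  have Fi: "integrable M (\<lambda>\<omega>. ?F x y (XX \<omega>))" for x y
  proof (rule Bochner_Integration.integrable_bound[where f="\<lambda>\<omega>. 16 * (?T \<omega>)\<^sup>2"])
    show "integrable M (\<lambda>\<omega>. 16 * (?T \<omega>)\<^sup>2)" using Tint by simp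
    show "(\<lambda>\<omega>. ?F x y (XX \<omega>)) \<in> borel_measurable M" by (rule measurable_compose[OF XX_meas Fm])
    show "AE \<omega> in M. norm (?F x y (XX \<omega>)) \<le> norm (16 * (?T \<omega>)\<^sup>2)"
    proof (rule AE_I2)
      fix \<omega>
      have "(IW x y a1 a2 (snd (XX \<omega>)))\<^sup>2 * (?T \<omega>)\<^sup>2 \<le> 16 * (?T \<omega>)\<^sup>2"
        by (rule mult_right_mono[OF IW_sq]) simp
      thus "norm (?F x y (XX \<omega>)) \<le> norm (16 * (?T \<omega>)\<^sup>2)"
        by (simp only: XX_selY[OF a1 a2]) simp
    qed
  qed
  have "(\<integral>\<omega>. (Ufun A1 A2 R Y V (\<lambda>e. \<beta>c (enc (fst e), enc (snd e))) \<omega> $ dtr_of a1 a2)\<^sup>2 \<partial>M)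
      = (\<integral>\<omega>. ?k * ((IW (A1 \<omega>) (A2 \<omega>) a1 a2 (snd (XX \<omega>)))\<^sup>2 * (?T \<omega>)\<^sup>2) \<partial>M)"
    by (rule Bochner_Integration.integral_cong[OF refl]) (rule U_sq[OF _ a1 a2])
  also have "\<dots> = ?k * (\<integral>\<omega>. (IW (A1 \<omega>) (A2 \<omega>) a1 a2 (snd (XX \<omega>)))\<^sup>2 * (?T \<omega>)\<^sup>2 \<partial>M)"
    by simp
  also have "(\<integral>\<omega>. (IW (A1 \<omega>) (A2 \<omega>) a1 a2 (snd (XX \<omega>)))\<^sup>2 * (?T \<omega>)\<^sup>2 \<partial>M)
      = (\<integral>\<omega>. ?F (A1 \<omega>) (A2 \<omega>) (XX \<omega>) \<partial>M)"
    by (simp only: XX_selY[OF a1 a2])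
  also have "\<dots> = 1/4 * (\<integral>\<omega>. (\<Sum>x\<in>{1,-1::int}. \<Sum>y\<in>{1,-1::int}. ?F x y (XX \<omega>)) \<partial>M)"
    by (rule decomp[where F="?F"]) (rule Fm, rule Fi)
  also have "(\<integral>\<omega>. (\<Sum>x\<in>{1,-1::int}. \<Sum>y\<in>{1,-1::int}. ?F x y (XX \<omega>)) \<partial>M)
      = (\<integral>\<omega>. 8 * (?T \<omega>)\<^sup>2 + 8 * (indicator ?N \<omega> * (?T \<omega>)\<^sup>2) \<partial>M)"
  proof (rule Bochner_Integration.integral_cong[OF refl])
    fix \<omega> assume w: "\<omega> \<in> space M"
    have "(\<Sum>x\<in>{1,-1::int}. \<Sum>y\<in>{1,-1::int}. ?F x y (XX \<omega>))
        = (if rsel a1 (snd (XX \<omega>)) then 8 else 16) * (\<Sum>j\<in>UNIV. selY a1 a2 (fst (XX \<omega>)) $ j - ?b)\<^sup>2"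
      by (simp only: sum_distrib_right[symmetric] sumIW2[OF a1 a2])
    also have "\<dots> = (if Rpo a1 \<omega> then 8 else 16) * (?T \<omega>)\<^sup>2"
      by (simp only: XX_rsel[OF a1] XX_selY[OF a1 a2])
    also have "\<dots> = 8 * (?T \<omega>)\<^sup>2 + 8 * (indicator ?N \<omega> * (?T \<omega>)\<^sup>2)"
      using w by (simp add: indicator_def)
    finally show "(\<Sum>x\<in>{1,-1::int}. \<Sum>y\<in>{1,-1::int}. ?F x y (XX \<omega>))
        = 8 * (?T \<omega>)\<^sup>2 + 8 * (indicator ?N \<omega> * (?T \<omega>)\<^sup>2)" .
  qed
  also have "\<dots> = 8 * (\<integral>\<omega>. (?T \<omega>)\<^sup>2 \<partial>M) + 8 * (\<integral>\<omega>. indicator ?N \<omega> * (?T \<omega>)\<^sup>2 \<partial>M)"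
    using Tint NTint by simp
  also have "1/4 * (8 * (\<integral>\<omega>. (?T \<omega>)\<^sup>2 \<partial>M) + 8 * (\<integral>\<omega>. indicator ?N \<omega> * (?T \<omega>)\<^sup>2 \<partial>M))
     = 2 * (\<integral>\<omega>. (?T \<omega>)\<^sup>2 \<partial>M) + 2 * (\<integral>\<omega>. indicator ?N \<omega> * (?T \<omega>)\<^sup>2 \<partial>M)"
    by (simp add: distrib_left)
  finally show ?thesis .
qed

lemma p_eq:
  assumes a1: "a1 \<in> {1,-1}"
  shows "p a1 = measure M {\<omega>\<in>space M. Rpo a1 \<omega>}"
proof -
  interpret prob_space M by (rule M)
  let ?E = "\<lambda>y. {\<omega>\<in>space M. A1 \<omega> = a1 \<and> A2 \<omega> = y}"
  let ?G = "\<lambda>y. {\<omega>\<in>space M. A1 \<omega> = a1 \<and> A2 \<omega> = y \<and> Rpo a1 \<omega>}"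
  let ?B = "(UNIV :: ((real^'m) \<times> (real^'m) \<times> (real^'m) \<times> (real^'m)) set) \<times> {rr. rsel a1 rr}"
  have B: "?B \<in> sets SS" by (intro pair_measureI) auto
  have G_eq: "?G y = {\<omega>\<in>space M. A1 \<omega> = a1 \<and> A2 \<omega> = y \<and> XX \<omega> \<in> ?B}" for y
    using XX_rsel[OF a1] by auto
  have G_meas: "measure M (?G y) = 1/4 * measure M {\<omega>\<in>space M. Rpo a1 \<omega>}" if y: "y \<in> {1,-1}" for y
  proof -
    have "measure M (?G y) = measure M (?E y) * measure M {\<omega>\<in>space M. XX \<omega> \<in> ?B}"
      unfolding G_eq by (rule independence[rule_format, OF B])
    moreover have "measure M (?E y) = 1/4" using randomization a1 y by blast
    moreover have "{\<omega>\<in>space M. XX \<omega> \<in> ?B} = {\<omega>\<in>space M. Rpo a1 \<omega>}" using XX_rsel[OF a1] by auto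
    ultimately show ?thesis by simp
  qed
  have Gs: "?G y \<in> sets M" for y
  proof -
    have "?G y = ?E y \<inter> {\<omega>\<in>space M. Rpo a1 \<omega>}" by auto
    thus ?thesis using E_sets N_sets(2) by auto
  qed
  have dE: "?E 1 \<inter> ?E (-1) = {}" by auto
  have dG: "?G 1 \<inter> ?G (-1) = {}" by auto
  have E1: "measure M (?E 1) = 1/4" using randomization a1 by blast
  have E2: "measure M (?E (-1)) = 1/4" using randomization a1 by blast
  have "{\<omega>\<in>space M. A1 \<omega> = a1} = ?E 1 \<union> ?E (-1)" using A_vals by auto
  hence "measure M {\<omega>\<in>space M. A1 \<omega> = a1} = measure M (?E 1) + measure M (?E (-1))"
    using finite_measure_Union[OF E_sets E_sets dE] by simp
  hence den: "measure M {\<omega>\<in>space M. A1 \<omega> = a1} = 1/2" using E1 E2 by simp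
  have "{\<omega>\<in>space M. R \<omega> \<and> A1 \<omega> = a1} = ?G 1 \<union> ?G (-1)" using A_vals consistency_R by auto
  hence "measure M {\<omega>\<in>space M. R \<omega> \<and> A1 \<omega> = a1} = measure M (?G 1) + measure M (?G (-1))"
    using finite_measure_Union[OF Gs Gs dG] by simp
  hence num: "measure M {\<omega>\<in>space M. R \<omega> \<and> A1 \<omega> = a1} = 1/2 * measure M {\<omega>\<in>space M. Rpo a1 \<omega>}"
    using G_meas[of 1] G_meas[of "-1"] by simp
  have "p a1 = measure M {\<omega>\<in>space M. R \<omega> \<and> A1 \<omega> = a1} / measure M {\<omega>\<in>space M. A1 \<omega> = a1}"
    using p_def a1 by blast
  thus ?thesis unfolding num den by simp
qed

end

lemma sq_cancel: "0 < (c::real) \<Longrightarrow> 0 < m \<Longrightarrow> (c/m)\<^sup>2 * ((1/c)\<^sup>2 * X) = X / m\<^sup>2"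
  by (simp add: power2_eq_square field_simps)

lemma part2_arith:
  fixes Z t1 t2 p1 p2 \<sigma>2 X m \<delta> :: real
  assumes t1: "t1 \<le> 2 * (2 - p1) * \<sigma>2 * X / m" and t2: "t2 \<le> 2 * (2 - p2) * \<sigma>2 * X / m"
    and s: "0 < \<sigma>2" and d: "0 < \<delta>" and m: "0 < m"
  shows "Z\<^sup>2 * (t1 + t2) / (\<delta>\<^sup>2 * \<sigma>2) \<le> 4 * Z\<^sup>2 / (m * \<delta>\<^sup>2) * X * (1 + ((1 - p1) + (1 - p2)) / 2)"
proof -
  have "Z\<^sup>2 * (t1 + t2) \<le> Z\<^sup>2 * (2 * (2 - p1) * \<sigma>2 * X / m + 2 * (2 - p2) * \<sigma>2 * X / m)"
    using t1 t2 by (intro mult_left_mono) auto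
  hence "Z\<^sup>2 * (t1 + t2) / (\<delta>\<^sup>2 * \<sigma>2) \<le> Z\<^sup>2 * (2 * (2 - p1) * \<sigma>2 * X / m + 2 * (2 - p2) * \<sigma>2 * X / m) / (\<delta>\<^sup>2 * \<sigma>2)"
    using s d by (intro divide_right_mono) auto
  also have "\<dots> = 4 * Z\<^sup>2 / (m * \<delta>\<^sup>2) * X * (1 + ((1 - p1) + (1 - p2)) / 2)"
    using s d m by (simp add: field_simps)
  finally show ?thesis .
qed

context smart
begin

lemma IN_bound:
  assumes a1: "a1 \<in> {1,-1}" and a2: "a2 \<in> {1,-1}"
    and lw: "loewner_le (cond_moment M (Ypo (a1, a2)) (\<beta>c (a1, a2)) {\<omega>\<in>space M. \<not> Rpo a1 \<omega>})
                   (covmat M (Ypo (a1, a2)))"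
  shows "(\<integral>\<omega>. indicator {\<omega>\<in>space M. \<not> Rpo a1 \<omega>} \<omega> * (\<Sum>j\<in>UNIV. Ypo (a1,a2) \<omega> $ j - \<beta>c (a1,a2))\<^sup>2 \<partial>M)
     \<le> measure M {\<omega>\<in>space M. \<not> Rpo a1 \<omega>} * (\<integral>\<omega>. (\<Sum>j\<in>UNIV. Ypo (a1,a2) \<omega> $ j - \<beta>c (a1,a2))\<^sup>2 \<partial>M)"
proof -
  interpret prob_space M by (rule M)
  let ?N = "{\<omega>\<in>space M. \<not> Rpo a1 \<omega>}"
  let ?T = "\<lambda>\<omega>. (\<Sum>j\<in>UNIV. Ypo (a1,a2) \<omega> $ j - \<beta>c (a1,a2))"
  let ?IN = "\<integral>\<omega>. indicator ?N \<omega> * (?T \<omega>)\<^sup>2 \<partial>M"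
  let ?K = "\<integral>\<omega>. (?T \<omega>)\<^sup>2 \<partial>M"
  have NTint: "integrable M (\<lambda>\<omega>. indicator ?N \<omega> * (?T \<omega>)\<^sup>2)"
  proof -
    have "integrable M (\<lambda>\<omega>. (?T \<omega>)\<^sup>2 * indicator ?N \<omega>)"
      by (rule integrable_real_mult_indicator[OF N_sets(1) Tsq_int[OF a1 a2]])
    thus ?thesis by (simp add: mult.commute)
  qed
  have "onesv \<bullet> (cond_moment M (Ypo (a1, a2)) (\<beta>c (a1, a2)) ?N *v onesv) \<le> onesv \<bullet> (covmat M (Ypo (a1, a2)) *v onesv)"
    using lw unfolding loewner_le_def by blast
  hence le: "(\<Sum>j\<in>UNIV. \<Sum>k\<in>UNIV. cond_moment M (Ypo (a1, a2)) (\<beta>c (a1, a2)) ?N $ j $ k)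
      \<le> (\<Sum>j\<in>UNIV. \<Sum>k\<in>UNIV. covmat M (Ypo (a1, a2)) $ j $ k)" by (simp only: ones_quad)
  have q: "?IN / measure M ?N \<le> ?K"
    using le unfolding cond_sum[OF a1 a2 N_sets(1)] cov_sum[OF a1 a2] .
  show ?thesis
  proof (cases "measure M ?N = 0")
    case True
    have null: "?N \<in> null_sets M" using True N_sets(1) by (simp add: null_sets_def emeasure_eq_measure)
    have "AE \<omega> in M. indicator ?N \<omega> * (?T \<omega>)\<^sup>2 = 0"
      using AE_not_in[OF null] by eventually_elim simp
    hence "?IN = (\<integral>\<omega>. 0 \<partial>M)"
      by (rule integral_cong_AE[OF borel_measurable_integrable[OF NTint] borel_measurable_const])
    thus ?thesis using True by simp
  next
    case False
    hence "0 < measure M ?N" using measure_nonneg[of M ?N] by linarith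
    thus ?thesis using q by (simp add: pos_divide_le_eq mult.commute)
  qed
qed

lemma part1:
  assumes a1: "a1 \<in> {1,-1}" and a2: "a2 \<in> {1,-1}"
    and lw: "loewner_le (cond_moment M (Ypo (a1, a2)) (\<beta>c (a1, a2)) {\<omega>\<in>space M. \<not> Rpo a1 \<omega>})
                   (covmat M (Ypo (a1, a2)))"
    and cv: "covmat M (Ypo (a1, a2)) = \<sigma>2 *\<^sub>R exch \<rho>"
  shows "tau2 M A1 A2 R Y V \<beta>c a1 a2 \<le> 2 * (2 - p a1) * \<sigma>2 * (1 + (real CARD('m) - 1) * \<rho>) / real CARD('m)"
proof -
  interpret prob_space M by (rule M)
  let ?m = "real CARD('m)"
  let ?c = "s\<^sup>2 * (1 + (real CARD('m) - 1) * r)"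
  let ?N = "{\<omega>\<in>space M. \<not> Rpo a1 \<omega>}"
  let ?q = "measure M {\<omega>\<in>space M. Rpo a1 \<omega>}"
  let ?T = "\<lambda>\<omega>. (\<Sum>j\<in>UNIV. Ypo (a1,a2) \<omega> $ j - \<beta>c (a1,a2))"
  let ?IN = "\<integral>\<omega>. indicator ?N \<omega> * (?T \<omega>)\<^sup>2 \<partial>M"
  let ?K = "\<integral>\<omega>. (?T \<omega>)\<^sup>2 \<partial>M"
  let ?X = "1 + (?m - 1) * \<rho>"
  have c: "0 < ?c" by (rule c0_pos)
  have m: "0 < ?m" by simp
  have "(\<Sum>j\<in>UNIV. \<Sum>k\<in>UNIV. (\<sigma>2 *\<^sub>R exch \<rho> :: real^'m^'m) $ j $ k) = \<sigma>2 * (\<Sum>j\<in>UNIV. \<Sum>k\<in>UNIV. (exch \<rho> :: real^'m^'m) $ j $ k)"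
    by (simp add: sum_distrib_left)
  hence K: "?K = \<sigma>2 * (?m * ?X)" using cov_sum[OF a1 a2] unfolding cv exch_sum by simp
  have "?N = space M - {\<omega>\<in>space M. Rpo a1 \<omega>}" by auto
  hence PN: "measure M ?N = 1 - ?q" using prob_compl[OF N_sets(2)] by simp
  have IN: "?IN \<le> (1 - ?q) * ?K" using IN_bound[OF a1 a2 lw] unfolding PN .
  have "tau2 M A1 A2 R Y V \<beta>c a1 a2 = (?c / ?m)\<^sup>2 * ((1/?c)\<^sup>2 * (2 * ?K + 2 * ?IN))"
    unfolding tau2_eq A_int[OF a1 a2] ..
  also have "\<dots> = (2 * ?K + 2 * ?IN) / ?m\<^sup>2" by (rule sq_cancel[OF c m])
  also have "\<dots> \<le> (2 * ?K + 2 * ((1 - ?q) * ?K)) / ?m\<^sup>2" using IN by (intro divide_right_mono) auto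
  also have "\<dots> = 2 * (2 - ?q) * \<sigma>2 * ?X / ?m" unfolding K using m by (simp add: power2_eq_square field_simps)
  also have "?q = p a1" using p_eq[OF a1] by simp
  finally show ?thesis .
qed

lemma main_both:
  shows
    "(\<forall>a1 a2 \<sigma>2 \<rho>. a1 \<in> {1, -1} \<longrightarrow> a2 \<in> {1, -1} \<longrightarrow>
        loewner_le (cond_moment M (Ypo (a1, a2)) (\<beta>c (a1, a2)) {\<omega>\<in>space M. \<not> Rpo a1 \<omega>})
                   (covmat M (Ypo (a1, a2))) \<longrightarrow>
        covmat M (Ypo (a1, a2)) = \<sigma>2 *\<^sub>R exch \<rho> \<longrightarrow>
        tau2 M A1 A2 R Y V \<beta>c a1 a2
          \<le> 2 * (2 - p a1) * \<sigma>2 * (1 + (real CARD('m) - 1) * \<rho>) / real CARD('m))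
     \<and>
     (\<forall>b2 c2 \<sigma>2 \<rho> \<delta> \<alpha> \<beta>. b2 \<in> {1, -1} \<longrightarrow> c2 \<in> {1, -1} \<longrightarrow>
        loewner_le (cond_moment M (Ypo (1, b2)) (\<beta>c (1, b2)) {\<omega>\<in>space M. \<not> Rpo 1 \<omega>})
                   (covmat M (Ypo (1, b2))) \<longrightarrow>
        loewner_le (cond_moment M (Ypo (-1, c2)) (\<beta>c (-1, c2)) {\<omega>\<in>space M. \<not> Rpo (-1) \<omega>})
                   (covmat M (Ypo (-1, c2))) \<longrightarrow>
        covmat M (Ypo (1, b2)) = \<sigma>2 *\<^sub>R exch \<rho> \<longrightarrow>
        covmat M (Ypo (-1, c2)) = \<sigma>2 *\<^sub>R exch \<rho> \<longrightarrow>
        0 < \<sigma>2 \<longrightarrow> 0 < \<delta> \<longrightarrow> 0 < \<alpha> \<longrightarrow> \<alpha> < 1 \<longrightarrow> 0 < \<beta> \<longrightarrow> \<beta> < 1 \<longrightarrow>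
        (zq \<beta> + zq (\<alpha>/2))\<^sup>2 * (tau2 M A1 A2 R Y V \<beta>c 1 b2 + tau2 M A1 A2 R Y V \<beta>c (-1) c2)
            / (\<delta>\<^sup>2 * \<sigma>2)
          \<le> 4 * (zq \<beta> + zq (\<alpha>/2))\<^sup>2 / (real CARD('m) * \<delta>\<^sup>2)
             * (1 + (real CARD('m) - 1) * \<rho>) * (1 + ((1 - p 1) + (1 - p (-1))) / 2))"
proof (intro conjI allI impI)
  fix a1 a2 \<sigma>2 \<rho>
  assume "a1 \<in> {1, -1}" "a2 \<in> {1, -1}"
    "loewner_le (cond_moment M (Ypo (a1, a2)) (\<beta>c (a1, a2)) {\<omega>\<in>space M. \<not> Rpo a1 \<omega>}) (covmat M (Ypo (a1, a2)))"
    "covmat M (Ypo (a1, a2)) = \<sigma>2 *\<^sub>R exch \<rho>"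
  thus "tau2 M A1 A2 R Y V \<beta>c a1 a2 \<le> 2 * (2 - p a1) * \<sigma>2 * (1 + (real CARD('m) - 1) * \<rho>) / real CARD('m)"
    by (rule part1)
next
  fix b2 c2 :: int and \<sigma>2 \<rho> \<delta> \<alpha> \<beta> :: real
  assume b2: "b2 \<in> {1, -1}" and c2: "c2 \<in> {1, -1}"
    and lw1: "loewner_le (cond_moment M (Ypo (1, b2)) (\<beta>c (1, b2)) {\<omega>\<in>space M. \<not> Rpo 1 \<omega>}) (covmat M (Ypo (1, b2)))"
    and lw2: "loewner_le (cond_moment M (Ypo (-1, c2)) (\<beta>c (-1, c2)) {\<omega>\<in>space M. \<not> Rpo (-1) \<omega>}) (covmat M (Ypo (-1, c2)))"
    and cv1: "covmat M (Ypo (1, b2)) = \<sigma>2 *\<^sub>R exch \<rho>"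
    and cv2: "covmat M (Ypo (-1, c2)) = \<sigma>2 *\<^sub>R exch \<rho>"
    and s: "0 < \<sigma>2" and d: "0 < \<delta>" and "0 < \<alpha>" "\<alpha> < 1" "0 < \<beta>" "\<beta> < 1"
  have one: "(1::int) \<in> {1,-1}" and mone: "(-1::int) \<in> {1,-1}" by simp_all
  show "(zq \<beta> + zq (\<alpha>/2))\<^sup>2 * (tau2 M A1 A2 R Y V \<beta>c 1 b2 + tau2 M A1 A2 R Y V \<beta>c (-1) c2)
            / (\<delta>\<^sup>2 * \<sigma>2)
          \<le> 4 * (zq \<beta> + zq (\<alpha>/2))\<^sup>2 / (real CARD('m) * \<delta>\<^sup>2)
             * (1 + (real CARD('m) - 1) * \<rho>) * (1 + ((1 - p 1) + (1 - p (-1))) / 2)"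
    by (rule part2_arith[OF part1[OF one b2 lw1 cv1] part1[OF mone c2 lw2 cv2] s d]) simp
qed

end

theorem mainTheorem3:
  fixes M :: "'w measure"
    and A1 A2 :: "'w \<Rightarrow> int" and R :: "'w \<Rightarrow> bool" and Y :: "'w \<Rightarrow> real^'m"
    and Ypo :: "int \<times> int \<Rightarrow> 'w \<Rightarrow> real^'m" and Rpo :: "int \<Rightarrow> 'w \<Rightarrow> bool"
    and \<beta>c :: "int \<times> int \<Rightarrow> real" and p :: "int \<Rightarrow> real"
    and V :: "real^'m^'m" and s r :: real
  assumes M: "prob_space M"
    and A_vals: "\<forall>\<omega>\<in>space M. A1 \<omega> \<in> {1, -1} \<and> A2 \<omega> \<in> {1, -1}"
    and A_meas: "A1 \<in> measurable M (count_space UNIV)" "A2 \<in> measurable M (count_space UNIV)"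
    and Rpo_meas: "\<forall>a1. Rpo a1 \<in> measurable M (count_space UNIV)"
    and Ypo_meas: "\<forall>d. Ypo d \<in> borel_measurable M"
    and randomization: "\<forall>a1\<in>{1,-1}. \<forall>a2\<in>{1,-1}.
          measure M {\<omega>\<in>space M. A1 \<omega> = a1 \<and> A2 \<omega> = a2} = 1/4"
    and independence: "\<forall>a1 a2. \<forall>B\<in>sets (borel \<Otimes>\<^sub>M count_space UNIV).
          measure M {\<omega>\<in>space M. A1 \<omega> = a1 \<and> A2 \<omega> = a2 \<and>
             ((Ypo (1,1) \<omega>, Ypo (1,-1) \<omega>, Ypo (-1,1) \<omega>, Ypo (-1,-1) \<omega>), (Rpo 1 \<omega>, Rpo (-1) \<omega>)) \<in> B}
          = measure M {\<omega>\<in>space M. A1 \<omega> = a1 \<and> A2 \<omega> = a2}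
            * measure M {\<omega>\<in>space M.
             ((Ypo (1,1) \<omega>, Ypo (1,-1) \<omega>, Ypo (-1,1) \<omega>, Ypo (-1,-1) \<omega>), (Rpo 1 \<omega>, Rpo (-1) \<omega>)) \<in> B}"
    and consistency_R: "\<forall>\<omega>\<in>space M. R \<omega> = Rpo (A1 \<omega>) \<omega>"
    and consistency_Y: "\<forall>a1\<in>{1,-1}. \<forall>a2\<in>{1,-1}. \<forall>\<omega>\<in>space M.
          A1 \<omega> = a1 \<and> (R \<omega> \<or> (\<not> R \<omega> \<and> A2 \<omega> = a2)) \<longrightarrow> Y \<omega> = Ypo (a1, a2) \<omega>"
    and second_moments: "\<forall>a1\<in>{1,-1}. \<forall>a2\<in>{1,-1}. \<forall>j.
          integrable M (\<lambda>\<omega>. (Ypo (a1, a2) \<omega> $ j)\<^sup>2)"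
    and mean_model: "\<forall>a1\<in>{1,-1}. \<forall>a2\<in>{1,-1}. \<forall>j.
          integral\<^sup>L M (\<lambda>\<omega>. Ypo (a1, a2) \<omega> $ j) = \<beta>c (a1, a2)"
    and p_def: "\<forall>a1\<in>{1,-1}. p a1 =
          measure M {\<omega>\<in>space M. R \<omega> \<and> A1 \<omega> = a1} / measure M {\<omega>\<in>space M. A1 \<omega> = a1}"
    and V_def: "V = s\<^sup>2 *\<^sub>R exch r"
    and V_pd: "pos_def V"
  shows
    "(\<forall>a1 a2 \<sigma>2 \<rho>. a1 \<in> {1, -1} \<longrightarrow> a2 \<in> {1, -1} \<longrightarrow>
        loewner_le (cond_moment M (Ypo (a1, a2)) (\<beta>c (a1, a2)) {\<omega>\<in>space M. \<not> Rpo a1 \<omega>})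
                   (covmat M (Ypo (a1, a2))) \<longrightarrow>
        covmat M (Ypo (a1, a2)) = \<sigma>2 *\<^sub>R exch \<rho> \<longrightarrow>
        tau2 M A1 A2 R Y V \<beta>c a1 a2
          \<le> 2 * (2 - p a1) * \<sigma>2 * (1 + (real CARD('m) - 1) * \<rho>) / real CARD('m))
     \<and>
     (\<forall>b2 c2 \<sigma>2 \<rho> \<delta> \<alpha> \<beta>. b2 \<in> {1, -1} \<longrightarrow> c2 \<in> {1, -1} \<longrightarrow>
        loewner_le (cond_moment M (Ypo (1, b2)) (\<beta>c (1, b2)) {\<omega>\<in>space M. \<not> Rpo 1 \<omega>})
                   (covmat M (Ypo (1, b2))) \<longrightarrow>
        loewner_le (cond_moment M (Ypo (-1, c2)) (\<beta>c (-1, c2)) {\<omega>\<in>space M. \<not> Rpo (-1) \<omega>})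
                   (covmat M (Ypo (-1, c2))) \<longrightarrow>
        covmat M (Ypo (1, b2)) = \<sigma>2 *\<^sub>R exch \<rho> \<longrightarrow>
        covmat M (Ypo (-1, c2)) = \<sigma>2 *\<^sub>R exch \<rho> \<longrightarrow>
        0 < \<sigma>2 \<longrightarrow> 0 < \<delta> \<longrightarrow> 0 < \<alpha> \<longrightarrow> \<alpha> < 1 \<longrightarrow> 0 < \<beta> \<longrightarrow> \<beta> < 1 \<longrightarrow>
        (zq \<beta> + zq (\<alpha>/2))\<^sup>2 * (tau2 M A1 A2 R Y V \<beta>c 1 b2 + tau2 M A1 A2 R Y V \<beta>c (-1) c2)
            / (\<delta>\<^sup>2 * \<sigma>2)
          \<le> 4 * (zq \<beta> + zq (\<alpha>/2))\<^sup>2 / (real CARD('m) * \<delta>\<^sup>2)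
             * (1 + (real CARD('m) - 1) * \<rho>) * (1 + ((1 - p 1) + (1 - p (-1))) / 2))"
    using smart.main_both[OF smart.intro[OF assms]] .

end
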